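(* There is no (possibly randomized) transaction fee mechanism with non-trivial miner revenue that satisfies both UIC and $1$-SCP. This holds whether the block size $B$ is finite or infinite.
   Context: Setting (transaction fee mechanism, TFM). Each user $i$ has a private true value $v_i\ge 0$ for having its transaction confirmed in the next block and submits a single bid $b_i\ge 0$; a bid vector is $\mathbf b=(b_1,\dots,b_m)$, $\mathbf b_{-i}$ denotes all bids except $b_i$, and $(\mathbf b_{-i},b_i')$ the vector with $b_i$ replaced by $b_i'$. A block contains at most $B$ transactions ($B$ a positive integer, or $B=\infty$). A TFM consists of an inclusion rule (run by the miner) selecting at most $B$ bids to include in the block, and a confirmation rule, payment rule and miner-revenue rule (run by the blockchain, using only the included bids) deciding which included bids are confirmed, what each confirmed bid pays (at most its bid; unconfirmed bids pay $0$), and what the miner receives (at most the total payment of confirmed bids; any remainder is "burnt"). Rules may be randomized; the mechanism treats users symmetrically (swapping two users' bids swaps their outcomes). Composing the honest inclusion rule with the other rules gives $(\mathbf x,\mathbf p,\mu)$: $x_i(\mathbf b)\in[0,1]$ is the probability user $i$ is confirmed, $p_i(\mathbf b)$ its expected payment, $\mu(\mathbf b)$ the miner's expected revenue. The TFM has non-trivial miner revenue if $\mu$ is not identically $0$. Strategic behavior: a strategic player is a single user, the miner, or a coalition of the miner with some users; it may have its users bid untruthfully after seeing all other bids, inject fake bids (true value $0$), and, if it contains the miner, include any set of at most $B$ available bids instead of following the inclusion rule. Ordinary utility of a player: miner's revenue (if the miner belongs to the player) plus $v-p$ for each confirmed transaction of the player with true value $v$ and payment $p$. UIC: assuming the miner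 follows the mechanism, each user's expected utility is maximized by bidding truthfully (no fake bids), whatever the other bids. $c$-SCP: for every coalition of the miner and between $1$ and $c$ users, the expected joint utility is maximized when its users bid truthfully and the miner follows the mechanism, whatever the other users' bids. *)

theory Defs
  imports "HOL-Probability.Probability" "HOL-Library.Extended_Nat"
begin

text \<open>A bid vector is a list of reals; user k is the owner of position k.
  An outcome of the blockchain-side rules on a list of included bids is a triple
  (C, p, r): the set C of confirmed positions (in the included list), the payment p j
  of each included position j, and the miner revenue r.  Randomization is modelled by pmfs
  (the confirmation, payment and miner-revenue rules share their randomness).
  The inclusion rule maps the bid vector to a random set of indices of bids to include.\<close>

type_synonym outcome = "nat set \<times> (nat \<Rightarrow> real) \<times> real"

record tfm =
  incl :: "real list \<Rightarrow> nat set pmf"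
  conf :: "real list \<Rightarrow> outcome pmf"

definition nonneg :: "real list \<Rightarrow> bool" where
  "nonneg b \<longleftrightarrow> (\<forall>y\<in>set b. 0 \<le> y)"

definition incl_bids :: "real list \<Rightarrow> nat set \<Rightarrow> real list" where
  "incl_bids b S = map (\<lambda>k. b ! k) (sorted_list_of_set S)"

definition valid_tfm :: "enat \<Rightarrow> tfm \<Rightarrow> bool" where
  "valid_tfm B M \<longleftrightarrow>
     (\<forall>b S. nonneg b \<longrightarrow> S \<in> set_pmf (incl M b) \<longrightarrow>
        S \<subseteq> {..<length b} \<and> enat (card S) \<le> B) \<and>
     (\<forall>c C p r. nonneg c \<longrightarrow> (C, p, r) \<in> set_pmf (conf M c) \<longrightarrow>
        C \<subseteq> {..<length c} \<and> (\<forall>j\<in>C. 0 \<le> p j \<and> p j \<le> c ! j) \<and> (\<forall>j. j \<notin> C \<longrightarrow> p j = 0) \<and>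
        0 \<le> r \<and> r \<le> (\<Sum>j\<in>C. p j))"

definition out_conf :: "tfm \<Rightarrow> real list \<Rightarrow> nat set \<Rightarrow> nat \<Rightarrow> real" where
  "out_conf M b S i = measure_pmf.expectation (conf M (incl_bids b S))
     (\<lambda>(C, p, r). if (\<exists>k<card S. sorted_list_of_set S ! k = i \<and> k \<in> C) then 1 else 0)"

definition out_pay :: "tfm \<Rightarrow> real list \<Rightarrow> nat set \<Rightarrow> nat \<Rightarrow> real" where
  "out_pay M b S i = measure_pmf.expectation (conf M (incl_bids b S))
     (\<lambda>(C, p, r). \<Sum>k\<in>{k. k < card S \<and> sorted_list_of_set S ! k = i}. p k)"

definition out_rev :: "tfm \<Rightarrow> real list \<Rightarrow> nat set \<Rightarrow> real" where
  "out_rev M b S = measure_pmf.expectation (conf M (incl_bids b S)) (\<lambda>(C, p, r). r)"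

definition xc :: "tfm \<Rightarrow> real list \<Rightarrow> nat \<Rightarrow> real" where
  "xc M b i = measure_pmf.expectation (incl M b) (\<lambda>S. out_conf M b S i)"

definition pc :: "tfm \<Rightarrow> real list \<Rightarrow> nat \<Rightarrow> real" where
  "pc M b i = measure_pmf.expectation (incl M b) (\<lambda>S. out_pay M b S i)"

definition mu :: "tfm \<Rightarrow> real list \<Rightarrow> real" where
  "mu M b = measure_pmf.expectation (incl M b) (\<lambda>S. out_rev M b S)"

definition nontrivial_revenue :: "tfm \<Rightarrow> bool" where
  "nontrivial_revenue M \<longleftrightarrow> (\<exists>b. nonneg b \<and> mu M b \<noteq> 0)"

definition symmetric_tfm :: "tfm \<Rightarrow> bool" where
  "symmetric_tfm M \<longleftrightarrow>
     (\<forall>b i j. nonneg b \<longrightarrow> i < length b \<longrightarrow> j < length b \<longrightarrow>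
        (let b' = b[i := b ! j, j := b ! i];
             sw = (\<lambda>k. if k = i then j else if k = j then i else k)
         in (\<forall>k<length b. xc M b' k = xc M b (sw k) \<and> pc M b' k = pc M b (sw k)) \<and>
            mu M b' = mu M b))"

text \<open>UIC: the honest vector is bs (so bs ! i is user i's true value); the deviating user i
  bids b' instead and injects fake bids fs (true value 0), appended after the real bids;
  the miner follows the honest inclusion rule.\<close>
definition UIC :: "tfm \<Rightarrow> bool" where
  "UIC M \<longleftrightarrow>
     (\<forall>bs i b' fs. nonneg bs \<longrightarrow> i < length bs \<longrightarrow> 0 \<le> b' \<longrightarrow> nonneg fs \<longrightarrow>
        (let d = bs[i := b'] @ fs in
           bs ! i * xc M d i - pc M d i - (\<Sum>k\<in>{length bs..<length d}. pc M d k))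
        \<le> bs ! i * xc M bs i - pc M bs i)"

text \<open>c-SCP: a coalition of the miner with a set U of between 1 and c users (true values bs ! j),
  whose users may bid d j instead, which may inject fake bids fs, and whose miner may include
  any set S of at most B of the available bids.  (Randomized deviations, and deviations in which
  the miner follows the inclusion rule, are convex combinations of these deterministic ones.)\<close>
definition c_SCP :: "enat \<Rightarrow> nat \<Rightarrow> tfm \<Rightarrow> bool" where
  "c_SCP B c M \<longleftrightarrow>
     (\<forall>bs U d fs S. nonneg bs \<longrightarrow> U \<subseteq> {..<length bs} \<longrightarrow> 1 \<le> card U \<longrightarrow> card U \<le> c \<longrightarrow>
        (\<forall>j\<in>U. 0 \<le> d j) \<longrightarrow> nonneg fs \<longrightarrow>
        (let b'' = map (\<lambda>j. if j \<in> U then d j else bs ! j) [0..<length bs] @ fs in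
          S \<subseteq> {..<length b''} \<longrightarrow> enat (card S) \<le> B \<longrightarrow>
          out_rev M b'' S + (\<Sum>j\<in>U. bs ! j * out_conf M b'' S j - out_pay M b'' S j)
            - (\<Sum>k\<in>{length bs..<length b''}. out_pay M b'' S k)
          \<le> mu M bs + (\<Sum>j\<in>U. bs ! j * xc M bs j - pc M bs j)))"

end

theory Submission
  imports Defs
begin

lemma step_bound:
  fixes F G X :: "real \<Rightarrow> real"
  assumes hF: "\<And>v w. 0\<le>v \<Longrightarrow> 0\<le>w \<Longrightarrow> F w + (v-w)*X w \<le> F v"
    and hG: "\<And>v w. 0\<le>v \<Longrightarrow> 0\<le>w \<Longrightarrow> G w + (v-w)*X w \<le> G v"
    and "0 \<le> a" "a \<le> b"
  shows "\<bar>(G b - F b) - (G a - F a)\<bar> \<le> (b-a)*(X b - X a)"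
proof -
  have 1: "F a + (b-a)*X a \<le> F b" using hF assms by auto
  have 2: "F b + (a-b)*X b \<le> F a" using hF assms by auto
  have 3: "G a + (b-a)*X a \<le> G b" using hG assms by auto
  have 4: "G b + (a-b)*X b \<le> G a" using hG assms by auto
  have e: "(a-b)*X b = - ((b-a)*X b)" by (simp add: algebra_simps)
  have e2: "(b-a)*(X b - X a) = (b-a)*X b - (b-a)*X a" by (simp add: algebra_simps)
  show ?thesis using 1 2 3 4 unfolding e e2 abs_le_iff by linarith
qed

lemma D_const:
  fixes F G X :: "real \<Rightarrow> real"
  assumes hF: "\<And>v w. 0\<le>v \<Longrightarrow> 0\<le>w \<Longrightarrow> F w + (v-w)*X w \<le> F v"
    and hG: "\<And>v w. 0\<le>v \<Longrightarrow> 0\<le>w \<Longrightarrow> G w + (v-w)*X w \<le> G v"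
    and v: "0 \<le> v"
  shows "G v - F v = G 0 - F 0"
proof -
  define D where "D t = G t - F t" for t
  have ind: "\<bar>D (real k * h) - D 0\<bar> \<le> h * (X (real k * h) - X 0)" if h: "0 \<le> h" for h k
  proof (induction k)
    case 0
    then show ?case by simp
  next
    case (Suc k)
    have s: "\<bar>D (real (Suc k) * h) - D (real k * h)\<bar> \<le> (real (Suc k) * h - real k * h) * (X (real (Suc k) * h) - X (real k * h))"
      unfolding D_def by (rule step_bound[OF hF hG]) (use h in \<open>auto simp: algebra_simps\<close>)
    have "real (Suc k) * h - real k * h = h" by (simp add: algebra_simps)
    then have s': "\<bar>D (real (Suc k) * h) - D (real k * h)\<bar> \<le> h * (X (real (Suc k) * h) - X (real k * h))"
      using s by simp
    have "h * (X (real (Suc k) * h) - X 0) = h * (X (real (Suc k) * h) - X (real k * h)) + h * (X (real k * h) - X 0)"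
      by (simp add: algebra_simps)
    then show ?case using Suc s' by linarith
  qed
  have bnd: "\<bar>D v - D 0\<bar> \<le> (v * (X v - X 0)) / real n" if n: "n \<ge> 1" for n :: nat
  proof -
    have "real n * (v / real n) = v" using n by simp
    then have "\<bar>D v - D 0\<bar> \<le> (v / real n) * (X v - X 0)"
      using ind[of "v / real n" n] v by simp
    then show ?thesis by simp
  qed
  show ?thesis
  proof (rule ccontr)
    assume "G v - F v \<noteq> G 0 - F 0"
    then have e: "\<bar>D v - D 0\<bar> > 0" unfolding D_def by simp
    define C where "C = v * (X v - X 0)"
    define n where "n = nat \<lceil>C / \<bar>D v - D 0\<bar>\<rceil> + 1"
    have n1: "n \<ge> 1" unfolding n_def by simp
    have "C / \<bar>D v - D 0\<bar> < real n" unfolding n_def using real_nat_ceiling_ge[of "C / \<bar>D v - D 0\<bar>"] by simp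
    then have "C < real n * \<bar>D v - D 0\<bar>" using e by (simp add: divide_less_eq mult.commute)
    then have "C / real n < \<bar>D v - D 0\<bar>" using n1 by (simp add: divide_less_eq mult.commute)
    with bnd[OF n1] show False unfolding C_def by linarith
  qed
qed


lemma fin_incl:
  assumes "valid_tfm B M" "nonneg b"
  shows "finite (set_pmf (incl M b))"
proof -
  have "set_pmf (incl M b) \<subseteq> Pow {..<length b}" using assms unfolding valid_tfm_def by blast
  then show ?thesis by (rule finite_subset) simp
qed

lemma exp_le:
  fixes f :: "'a \<Rightarrow> real"
  assumes "finite (set_pmf p)" "\<And>S. S \<in> set_pmf p \<Longrightarrow> f S \<le> c"
  shows "measure_pmf.expectation p f \<le> c"
  by (rule measure_pmf.integral_le_const)
     (use assms in \<open>auto simp: integrable_measure_pmf_finite AE_measure_pmf_iff\<close>)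

lemma exp_lin:
  fixes a b c :: "'a \<Rightarrow> real"
  assumes "finite (set_pmf p)"
  shows "measure_pmf.expectation p (\<lambda>S. a S + (v * b S - c S)) =
     measure_pmf.expectation p a + (v * measure_pmf.expectation p b - measure_pmf.expectation p c)"
proof -
  have i: "integrable (measure_pmf p) f" for f :: "'a \<Rightarrow> real"
    using assms by (rule integrable_measure_pmf_finite)
  show ?thesis
    by (simp add: Bochner_Integration.integral_add[OF i i] Bochner_Integration.integral_diff[OF i i] i)
qed

lemma nonneg_upd: "nonneg bs \<Longrightarrow> 0 \<le> v \<Longrightarrow> nonneg (bs[i := v])"
  unfolding nonneg_def using set_update_subset_insert by fastforce

lemma scp_ineq:
  assumes valid: "valid_tfm B M" and scp: "c_SCP B 1 M"
    and nn: "nonneg bs" and i: "i < length bs" and v: "0 \<le> v" and w: "0 \<le> w"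
  shows "mu M (bs[i:=w]) + (v * xc M (bs[i:=w]) i - pc M (bs[i:=w]) i)
         \<le> mu M (bs[i:=v]) + (v * xc M (bs[i:=v]) i - pc M (bs[i:=v]) i)"
proof -
  define c where "c = bs[i:=v]"
  define d where "d = bs[i:=w]"
  have nc: "nonneg c" and nd: "nonneg d" using nonneg_upd nn v w unfolding c_def d_def by auto
  have map_eq: "map (\<lambda>j. if j \<in> {i} then w else c ! j) [0..<length c] @ [] = d"
    unfolding c_def d_def by (rule nth_equalityI) (use i in auto)
  have ci: "c ! i = v" unfolding c_def using i by simp
  have lc: "length d = length c" unfolding c_def d_def by simp
  have pt: "out_rev M d S + (v * out_conf M d S i - out_pay M d S i)
      \<le> mu M c + (v * xc M c i - pc M c i)" if S: "S \<in> set_pmf (incl M d)" for S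
  proof -
    have S1: "S \<subseteq> {..<length d}" and S2: "enat (card S) \<le> B"
      using valid nd S unfolding valid_tfm_def by blast+
    have U: "{i} \<subseteq> {..<length c}" using i unfolding c_def by simp
    have fs: "nonneg ([] :: real list)" unfolding nonneg_def by simp
    have cd1: "1 \<le> card {i}" "card {i} \<le> (1::nat)" by simp_all
    have wU: "\<forall>j\<in>{i}. 0 \<le> (\<lambda>_. w) j" using w by simp
    note sc2 = scp[unfolded c_SCP_def, THEN spec[of _ c], THEN spec[of _ "{i}"], THEN spec[of _ "\<lambda>_. w"],
       THEN spec[of _ "[]"], THEN spec[of _ S], THEN mp, OF nc, THEN mp, OF U, THEN mp, OF cd1(1),
       THEN mp, OF cd1(2), THEN mp, OF wU, THEN mp, OF fs]
    show ?thesis using sc2 S1 S2 unfolding map_eq Let_def using ci lc by simp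
  qed
  have "measure_pmf.expectation (incl M d) (\<lambda>S. out_rev M d S + (v * out_conf M d S i - out_pay M d S i))
      \<le> mu M c + (v * xc M c i - pc M c i)"
    by (rule exp_le[OF fin_incl[OF valid nd]]) (rule pt)
  then show ?thesis
    unfolding exp_lin[OF fin_incl[OF valid nd]] unfolding c_def[symmetric] d_def[symmetric]
    by (simp add: mu_def xc_def pc_def)
qed

lemma uic_ineq:
  assumes uic: "UIC M"
    and nn: "nonneg bs" and i: "i < length bs" and v: "0 \<le> v" and w: "0 \<le> w"
  shows "v * xc M (bs[i:=w]) i - pc M (bs[i:=w]) i
         \<le> v * xc M (bs[i:=v]) i - pc M (bs[i:=v]) i"
proof -
  have nc: "nonneg (bs[i:=v])" using nonneg_upd nn v by auto
  have fs: "nonneg ([] :: real list)" unfolding nonneg_def by simp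
  have il: "i < length (bs[i:=v])" using i by simp
  note u = uic[unfolded UIC_def, THEN spec[of _ "bs[i:=v]"], THEN spec[of _ i], THEN spec[of _ w],
     THEN spec[of _ "[]"], THEN mp, OF nc, THEN mp, OF il, THEN mp, OF w, THEN mp, OF fs]
  show ?thesis using u i by (simp add: Let_def)
qed

lemma mu_indep:
  assumes valid: "valid_tfm B M" and scp: "c_SCP B 1 M" and uic: "UIC M"
    and nn: "nonneg bs" and i: "i < length bs"
  shows "mu M bs = mu M (bs[i:=0])"
proof -
  define X where "X t = xc M (bs[i:=t]) i" for t
  define P where "P t = pc M (bs[i:=t]) i" for t
  define m where "m t = mu M (bs[i:=t])" for t
  define F where "F t = t * X t - P t" for t
  define G where "G t = F t + m t" for t
  have hF: "F w + (v-w)*X w \<le> F v" if "0\<le>v" "0\<le>w" for v w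
  proof -
    have "v * X w - P w \<le> v * X v - P v"
      using uic_ineq[OF uic nn i that] unfolding X_def P_def by simp
    moreover have "F w + (v-w)*X w = v * X w - P w" unfolding F_def by (simp add: algebra_simps)
    ultimately show ?thesis unfolding F_def by simp
  qed
  have hG: "G w + (v-w)*X w \<le> G v" if "0\<le>v" "0\<le>w" for v w
  proof -
    have "m w + (v * X w - P w) \<le> m v + (v * X v - P v)"
      using scp_ineq[OF valid scp nn i that] unfolding X_def P_def m_def by simp
    moreover have "G w + (v-w)*X w = m w + (v * X w - P w)" unfolding G_def F_def by (simp add: algebra_simps)
    ultimately show ?thesis unfolding G_def F_def by simp
  qed
  have bi: "0 \<le> bs ! i" using nn i unfolding nonneg_def by simp
  have "G (bs!i) - F (bs!i) = G 0 - F 0" by (rule D_const[OF hF hG bi])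
  then have "m (bs!i) = m 0" unfolding G_def by simp
  then show ?thesis unfolding m_def by simp
qed

lemma mu_zeros:
  assumes valid: "valid_tfm B M"
  shows "mu M (replicate n 0) = 0"
proof -
  let ?z = "replicate n (0::real)"
  have nz: "nonneg ?z" unfolding nonneg_def by simp
  have "out_rev M ?z S = 0" if S: "S \<in> set_pmf (incl M ?z)" for S
  proof -
    have S1: "S \<subseteq> {..<n}" using valid nz S unfolding valid_tfm_def by fastforce
    have fin: "finite S" using S1 finite_subset by blast
    have setc: "set (incl_bids ?z S) \<subseteq> {0}"
      unfolding incl_bids_def using S1 fin by auto
    have nc: "nonneg (incl_bids ?z S)" using setc unfolding nonneg_def by auto
    have "r = 0" if o: "(C, p, r) \<in> set_pmf (conf M (incl_bids ?z S))" for C p r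
    proof -
      have h: "C \<subseteq> {..<length (incl_bids ?z S)}" "\<forall>j\<in>C. 0 \<le> p j \<and> p j \<le> incl_bids ?z S ! j"
        "0 \<le> r" "r \<le> (\<Sum>j\<in>C. p j)"
        using valid nc o unfolding valid_tfm_def by blast+
      have "\<forall>j\<in>C. p j \<le> 0"
      proof
        fix j assume j: "j \<in> C"
        then have "incl_bids ?z S ! j \<in> set (incl_bids ?z S)" using h(1) by auto
        then have "incl_bids ?z S ! j = 0" using setc by auto
        then show "p j \<le> 0" using h(2) j by auto
      qed
      then have "(\<Sum>j\<in>C. p j) \<le> 0" by (simp add: sum_nonpos)
      then show ?thesis using h by linarith
    qed
    then have "AE x in measure_pmf (conf M (incl_bids ?z S)). (case x of (C, p, r) \<Rightarrow> r) = 0"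
      by (auto simp: AE_measure_pmf_iff)
    then show ?thesis unfolding out_rev_def by (simp add: integral_cong_AE)
  qed
  then have "AE S in measure_pmf (incl M ?z). out_rev M ?z S = 0"
    by (auto simp: AE_measure_pmf_iff)
  then show ?thesis unfolding mu_def by (simp add: integral_cong_AE)
qed

theorem mainTheorem1:
  fixes B :: enat and M :: tfm
  assumes "B \<noteq> 0"
    and "valid_tfm B M"
    and "symmetric_tfm M"
    and "UIC M"
    and "c_SCP B 1 M"
  shows "\<not> nontrivial_revenue M"
proof -
  have main: "mu M bs = mu M (replicate k 0 @ drop k bs)" if nn: "nonneg bs" and k: "k \<le> length bs" for bs k
    using k
  proof (induction k)
    case 0
    then show ?case by simp
  next
    case (Suc k)
    define c where "c = replicate k 0 @ drop k bs"
    have kl: "k < length bs" using Suc by simp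
    have lc: "length c = length bs" unfolding c_def using kl by simp
    have nc: "nonneg c" using nn unfolding c_def nonneg_def by (auto dest: in_set_dropD)
    have "mu M c = mu M (c[k:=0])" by (rule mu_indep[OF assms(2) assms(5) assms(4) nc]) (use lc kl in simp)
    moreover have "c[k:=0] = replicate (Suc k) 0 @ drop (Suc k) bs"
    proof -
      have dk: "drop k bs = bs!k # drop (Suc k) bs" using kl by (simp add: Cons_nth_drop_Suc)
      have rr: "replicate (Suc k) (0::real) @ xs = replicate k 0 @ 0 # xs" for xs
        by (induction k) auto
      show ?thesis unfolding c_def dk rr by (simp add: list_update_append)
    qed
    ultimately show ?case using Suc c_def by simp
  qed
  show ?thesis
  proof
    assume "nontrivial_revenue M"
    then obtain b where b: "nonneg b" "mu M b \<noteq> 0" unfolding nontrivial_revenue_def by blast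
    have "mu M b = mu M (replicate (length b) 0)" using main[OF b(1), of "length b"] by simp
    then show False using b mu_zeros[OF assms(2)] by simp
  qed
qed

end
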